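(* Let $\Bbbk$ be a field, $A$ a $\Bbbk$-algebra and $\Gamma$ a subalgebra of $A$, and let $\sim$ be an equivalence relation on $\mathrm{cfs}(\Gamma)$. Suppose $\Gamma$ is a Harish-Chandra block subalgebra of $A$ with respect to $\sim$. Then: (i) $\mathrm{HC}(A;\Gamma,\sim)=\bigoplus_{\mathcal{D}\in(\mathrm{cfs}(\Gamma)/{\sim})/\Delta}\mathrm{HC}(A;\Gamma,\sim;\mathcal{D})$; that is, every $V\in \mathrm{HC}(A;\Gamma,\sim)$ is the direct sum, as $A$-modules, of modules $V_{\mathcal D}\in \mathrm{HC}(A;\Gamma,\sim;\mathcal{D})$ (one for each $\Delta$-class $\mathcal D$), and there are no nonzero $A$-module maps between objects of $\mathrm{HC}(A;\Gamma,\sim;\mathcal{D})$ and $\mathrm{HC}(A;\Gamma,\sim;\mathcal{D}')$ for distinct $\Delta$-classes $\mathcal D\neq\mathcal D'$. (ii) $\mathrm{Irr}(A;\Gamma,\sim)=\bigsqcup_{\mathcal{D}\in(\mathrm{cfs}(\Gamma)/{\sim})/\nabla}\mathrm{Irr}(A;\Gamma,\sim;\mathcal{D})$.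
   Context: All algebras are associative unital $\Bbbk$-algebras. $\mathrm{cfs}(\Gamma)$ denotes the set of maximal two-sided ideals $\mathfrak m$ of $\Gamma$ with $\Gamma/\mathfrak m$ finite-dimensional. For an equivalence class $B\in\mathrm{cfs}(\Gamma)/{\sim}$ let $\mathcal W(B)=\{\mathfrak m_1\cdots\mathfrak m_k: k\ge 0,\ \mathfrak m_1,\dots,\mathfrak m_k\in B\}$ (products of ideals; the empty product is $\Gamma$). For a $\Gamma$-module $V$ the block space is $V(B)=\{v\in V:\mathfrak m v=0\text{ for some }\mathfrak m\in\mathcal W(B)\}$; the sum $\sum_B V(B)$ is always direct. $V$ is a block module if $V=\bigoplus_{B}V(B)$, and $\mathrm{Supp}(V)=\{B: V(B)\neq 0\}$. A Harish-Chandra block module is an $A$-module that is a block module as a $\Gamma$-module; $\mathrm{HC}(A;\Gamma,\sim)$ is the full subcategory of $A$-modules consisting of these. $\Gamma$ is a Harish-Chandra block subalgebra of $A$ (w.r.t. $\sim$) if the left $A$-module $A/A\mathfrak m$ is a Harish-Chandra block module for every $B$ and every $\mathfrak m\in\mathcal W(B)$. Let $\prec$ be the preorder on $\mathrm{cfs}(\Gamma)/{\sim}$ generated by the pairs $B\prec C$ whenever $C\in\mathrm{Supp}(A/A\mathfrak m)$ for some $\mathfrak m\in B$. Let $\Delta$ be the equivalence relation generated by $\prec$ and $\nabla$ the equivalence relation induced by $\prec$ ($B\,\nabla\, C$ iff $B\prec C$ and $C\prec B$). For $\mathcal D\subseteq \mathrm{cfs}(\Gamma)/{\sim}$, $\mathrm{HC}(A;\Gamma,\sim;\mathcal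 D)$ is the full subcategory of Harish-Chandra block modules $V$ with $\mathrm{Supp}(V)\subseteq\mathcal D$, and $\mathrm{Irr}(A;\Gamma,\sim;\mathcal D)$ is the set of isomorphism classes of simple objects of it; $\mathrm{Irr}(A;\Gamma,\sim)$ is the set of isomorphism classes of simple Harish-Chandra block modules. *)

theory Defs
  imports Complex_Main
begin

record ('a, 'v) amod =
  mcarrier :: "'v set"
  madd :: "'v \<Rightarrow> 'v \<Rightarrow> 'v"
  mzero :: "'v"
  mact :: "'a \<Rightarrow> 'v \<Rightarrow> 'v"

definition is_amod :: "('a::{ring,monoid_mult}, 'v) amod \<Rightarrow> bool" where
  "is_amod V \<longleftrightarrow>
     mzero V \<in> mcarrier V \<and>
     (\<forall>v\<in>mcarrier V. \<forall>w\<in>mcarrier V. madd V v w \<in> mcarrier V) \<and>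
     (\<forall>u\<in>mcarrier V. \<forall>v\<in>mcarrier V. \<forall>w\<in>mcarrier V. madd V (madd V u v) w = madd V u (madd V v w)) \<and>
     (\<forall>v\<in>mcarrier V. \<forall>w\<in>mcarrier V. madd V v w = madd V w v) \<and>
     (\<forall>v\<in>mcarrier V. madd V (mzero V) v = v) \<and>
     (\<forall>v\<in>mcarrier V. \<exists>w\<in>mcarrier V. madd V v w = mzero V) \<and>
     (\<forall>a. \<forall>v\<in>mcarrier V. mact V a v \<in> mcarrier V) \<and>
     (\<forall>a b. \<forall>v\<in>mcarrier V. mact V (a + b) v = madd V (mact V a v) (mact V b v)) \<and>
     (\<forall>a. \<forall>v\<in>mcarrier V. \<forall>w\<in>mcarrier V. mact V a (madd V v w) = madd V (mact V a v) (mact V a w)) \<and>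
     (\<forall>a b. \<forall>v\<in>mcarrier V. mact V (a * b) v = mact V a (mact V b v)) \<and>
     (\<forall>v\<in>mcarrier V. mact V 1 v = v)"

definition submod :: "'v set \<Rightarrow> ('a::{ring,monoid_mult}, 'v) amod \<Rightarrow> bool" where
  "submod U V \<longleftrightarrow> U \<subseteq> mcarrier V \<and> is_amod (V\<lparr>mcarrier := U\<rparr>)"

definition amod_hom :: "('a::{ring,monoid_mult}, 'v) amod \<Rightarrow> ('a, 'w) amod \<Rightarrow> ('v \<Rightarrow> 'w) \<Rightarrow> bool" where
  "amod_hom V W f \<longleftrightarrow>
     (\<forall>v\<in>mcarrier V. f v \<in> mcarrier W) \<and>
     (\<forall>v\<in>mcarrier V. \<forall>w\<in>mcarrier V. f (madd V v w) = madd W (f v) (f w)) \<and>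
     (\<forall>a. \<forall>v\<in>mcarrier V. f (mact V a v) = mact W a (f v))"

definition simple_amod :: "('a::{ring,monoid_mult}, 'v) amod \<Rightarrow> bool" where
  "simple_amod V \<longleftrightarrow> is_amod V \<and> mcarrier V \<noteq> {mzero V} \<and>
     (\<forall>U. submod U V \<longrightarrow> U = {mzero V} \<or> U = mcarrier V)"

primrec lsum :: "('a, 'v) amod \<Rightarrow> 'v list \<Rightarrow> 'v" where
  "lsum V [] = mzero V"
| "lsum V (x # xs) = madd V x (lsum V xs)"

definition is_direct_sum :: "('a, 'v) amod \<Rightarrow> 'i set \<Rightarrow> ('i \<Rightarrow> 'v set) \<Rightarrow> bool" where
  "is_direct_sum V I F \<longleftrightarrow>
     (\<forall>i\<in>I. F i \<subseteq> mcarrier V) \<and>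
     (\<forall>v\<in>mcarrier V. \<exists>is f. distinct is \<and> set is \<subseteq> I \<and> (\<forall>i\<in>set is. f i \<in> F i)
                                \<and> v = lsum V (map f is)) \<and>
     (\<forall>is f. distinct is \<and> set is \<subseteq> I \<and> (\<forall>i\<in>set is. f i \<in> F i)
                \<and> lsum V (map f is) = mzero V \<longrightarrow> (\<forall>i\<in>set is. f i = mzero V))"

definition is_kalgebra :: "('k::field \<Rightarrow> 'a::{ring,monoid_mult} \<Rightarrow> 'a) \<Rightarrow> bool" where
  "is_kalgebra smult \<longleftrightarrow> vector_space smult \<and>
     (\<forall>c x y. smult c (x * y) = smult c x * y \<and> smult c (x * y) = x * smult c y)"

definition is_subalgebra :: "('k::field \<Rightarrow> 'a::{ring,monoid_mult} \<Rightarrow> 'a) \<Rightarrow> 'a set \<Rightarrow> bool" where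
  "is_subalgebra smult G \<longleftrightarrow> 1 \<in> G \<and> 0 \<in> G \<and>
     (\<forall>x\<in>G. \<forall>y\<in>G. x + y \<in> G \<and> x * y \<in> G) \<and> (\<forall>x\<in>G. - x \<in> G) \<and>
     (\<forall>c. \<forall>x\<in>G. smult c x \<in> G)"

definition is_ideal :: "'a::{ring,monoid_mult} set \<Rightarrow> 'a set \<Rightarrow> bool" where
  "is_ideal G I \<longleftrightarrow> I \<subseteq> G \<and> 0 \<in> I \<and> (\<forall>x\<in>I. \<forall>y\<in>I. x + y \<in> I) \<and> (\<forall>x\<in>I. - x \<in> I) \<and>
     (\<forall>g\<in>G. \<forall>x\<in>I. g * x \<in> I \<and> x * g \<in> I)"

definition max_ideal :: "'a::{ring,monoid_mult} set \<Rightarrow> 'a set \<Rightarrow> bool" where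
  "max_ideal G m \<longleftrightarrow> is_ideal G m \<and> m \<noteq> G \<and>
     (\<forall>J. is_ideal G J \<and> m \<subseteq> J \<longrightarrow> J = m \<or> J = G)"

text \<open>G/m is finite-dimensional over k: G is spanned modulo m by finitely many elements.\<close>
definition findim_quot :: "('k::field \<Rightarrow> 'a::{ring,monoid_mult} \<Rightarrow> 'a) \<Rightarrow> 'a set \<Rightarrow> 'a set \<Rightarrow> bool" where
  "findim_quot smult G m \<longleftrightarrow>
     (\<exists>F. finite F \<and> F \<subseteq> G \<and> (\<forall>g\<in>G. \<exists>y\<in>m. g - y \<in> module.span smult F))"

definition cfs :: "('k::field \<Rightarrow> 'a::{ring,monoid_mult} \<Rightarrow> 'a) \<Rightarrow> 'a set \<Rightarrow> 'a set set" where
  "cfs smult G = {m. max_ideal G m \<and> findim_quot smult G m}"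

inductive_set ideal_prod :: "'a::{ring,monoid_mult} set \<Rightarrow> 'a set \<Rightarrow> 'a set" for I J where
  ip_zero: "0 \<in> ideal_prod I J"
| ip_prod: "x \<in> I \<Longrightarrow> y \<in> J \<Longrightarrow> x * y \<in> ideal_prod I J"
| ip_add: "a \<in> ideal_prod I J \<Longrightarrow> b \<in> ideal_prod I J \<Longrightarrow> a + b \<in> ideal_prod I J"

inductive_set Wset :: "'a::{ring,monoid_mult} set \<Rightarrow> 'a set set \<Rightarrow> 'a set set" for G B where
  W_empty: "G \<in> Wset G B"
| W_step: "I \<in> Wset G B \<Longrightarrow> m \<in> B \<Longrightarrow> ideal_prod I m \<in> Wset G B"

inductive_set left_gen :: "'a::{ring,monoid_mult} set \<Rightarrow> 'a set" for N where
  lg_zero: "0 \<in> left_gen N"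
| lg_prod: "x \<in> N \<Longrightarrow> a * x \<in> left_gen N"
| lg_add: "u \<in> left_gen N \<Longrightarrow> v \<in> left_gen N \<Longrightarrow> u + v \<in> left_gen N"

definition quot_mod :: "'a::{ring,monoid_mult} set \<Rightarrow> ('a, 'a set) amod" where
  "quot_mod L = \<lparr> mcarrier = range (\<lambda>a. (\<lambda>n. a + n) ` L),
                  madd = (\<lambda>C D. {x + y | x y. x \<in> C \<and> y \<in> D}),
                  mzero = L,
                  mact = (\<lambda>a C. {x. \<exists>c\<in>C. x - a * c \<in> L}) \<rparr>"

definition classes :: "('k::field \<Rightarrow> 'a::{ring,monoid_mult} \<Rightarrow> 'a) \<Rightarrow> 'a set \<Rightarrow> ('a set \<times> 'a set) set \<Rightarrow> 'a set set set" where
  "classes smult G R = cfs smult G // R"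

definition blk :: "'a::{ring,monoid_mult} set \<Rightarrow> ('a, 'v) amod \<Rightarrow> 'a set set \<Rightarrow> 'v set" where
  "blk G V B = {v \<in> mcarrier V. \<exists>I\<in>Wset G B. \<forall>x\<in>I. mact V x v = mzero V}"

definition is_block_module :: "('k::field \<Rightarrow> 'a::{ring,monoid_mult} \<Rightarrow> 'a) \<Rightarrow> 'a set \<Rightarrow> ('a set \<times> 'a set) set \<Rightarrow> ('a, 'v) amod \<Rightarrow> bool" where
  "is_block_module smult G R V \<longleftrightarrow> is_direct_sum V (classes smult G R) (blk G V)"

definition Supp :: "('k::field \<Rightarrow> 'a::{ring,monoid_mult} \<Rightarrow> 'a) \<Rightarrow> 'a set \<Rightarrow> ('a set \<times> 'a set) set \<Rightarrow> ('a, 'v) amod \<Rightarrow> 'a set set set" where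
  "Supp smult G R V = {B \<in> classes smult G R. blk G V B \<noteq> {mzero V}}"

definition HC :: "('k::field \<Rightarrow> 'a::{ring,monoid_mult} \<Rightarrow> 'a) \<Rightarrow> 'a set \<Rightarrow> ('a set \<times> 'a set) set \<Rightarrow> ('a, 'v) amod \<Rightarrow> bool" where
  "HC smult G R V \<longleftrightarrow> is_amod V \<and> is_block_module smult G R V"

definition HC_D :: "('k::field \<Rightarrow> 'a::{ring,monoid_mult} \<Rightarrow> 'a) \<Rightarrow> 'a set \<Rightarrow> ('a set \<times> 'a set) set \<Rightarrow> 'a set set set \<Rightarrow> ('a, 'v) amod \<Rightarrow> bool" where
  "HC_D smult G R D V \<longleftrightarrow> HC smult G R V \<and> Supp smult G R V \<subseteq> D"

definition HC_block_subalgebra :: "('k::field \<Rightarrow> 'a::{ring,monoid_mult} \<Rightarrow> 'a) \<Rightarrow> 'a set \<Rightarrow> ('a set \<times> 'a set) set \<Rightarrow> bool" where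
  "HC_block_subalgebra smult G R \<longleftrightarrow>
     (\<forall>B\<in>classes smult G R. \<forall>I\<in>Wset G B. HC smult G R (quot_mod (left_gen I)))"

definition prec_base :: "('k::field \<Rightarrow> 'a::{ring,monoid_mult} \<Rightarrow> 'a) \<Rightarrow> 'a set \<Rightarrow> ('a set \<times> 'a set) set \<Rightarrow> ('a set set \<times> 'a set set) set" where
  "prec_base smult G R = {(B, C). B \<in> classes smult G R \<and> C \<in> classes smult G R \<and>
       (\<exists>m\<in>B. C \<in> Supp smult G R (quot_mod (left_gen m)))}"

definition prec :: "('k::field \<Rightarrow> 'a::{ring,monoid_mult} \<Rightarrow> 'a) \<Rightarrow> 'a set \<Rightarrow> ('a set \<times> 'a set) set \<Rightarrow> ('a set set \<times> 'a set set) set" where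
  "prec smult G R = Id_on (classes smult G R) \<union> (prec_base smult G R)\<^sup>+"

definition Delta :: "('k::field \<Rightarrow> 'a::{ring,monoid_mult} \<Rightarrow> 'a) \<Rightarrow> 'a set \<Rightarrow> ('a set \<times> 'a set) set \<Rightarrow> ('a set set \<times> 'a set set) set" where
  "Delta smult G R = Id_on (classes smult G R) \<union> (prec smult G R \<union> (prec smult G R)\<inverse>)\<^sup>+"

definition Nabla :: "('k::field \<Rightarrow> 'a::{ring,monoid_mult} \<Rightarrow> 'a) \<Rightarrow> 'a set \<Rightarrow> ('a set \<times> 'a set) set \<Rightarrow> ('a set set \<times> 'a set set) set" where
  "Nabla smult G R = prec smult G R \<inter> (prec smult G R)\<inverse>"

end

theory Submission
  imports Defs
begin



locale amodl =
  fixes V :: "('a::{ring,monoid_mult}, 'v) amod"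
  assumes amod: "is_amod V"
begin

abbreviation "C \<equiv> mcarrier V"
abbreviation pl (infixl "\<oplus>" 65) where "pl \<equiv> madd V"
abbreviation "z \<equiv> mzero V"
abbreviation ac (infixr "\<cdot>" 75) where "ac \<equiv> mact V"

lemma zero_in[simp]: "z \<in> C" using amod unfolding is_amod_def by blast
lemma add_in[simp]: "v \<in> C \<Longrightarrow> w \<in> C \<Longrightarrow> v \<oplus> w \<in> C" using amod unfolding is_amod_def by auto
lemma assoc: "u \<in> C \<Longrightarrow> v \<in> C \<Longrightarrow> w \<in> C \<Longrightarrow> (u \<oplus> v) \<oplus> w = u \<oplus> (v \<oplus> w)"
  using amod unfolding is_amod_def by blast
lemma comm: "v \<in> C \<Longrightarrow> w \<in> C \<Longrightarrow> v \<oplus> w = w \<oplus> v" using amod unfolding is_amod_def by blast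
lemma zero_l[simp]: "v \<in> C \<Longrightarrow> z \<oplus> v = v" using amod unfolding is_amod_def by blast
lemma zero_r[simp]: "v \<in> C \<Longrightarrow> v \<oplus> z = v" using comm zero_l zero_in by metis
lemma inv_ex: "v \<in> C \<Longrightarrow> \<exists>w\<in>C. v \<oplus> w = z" using amod unfolding is_amod_def by blast
lemma act_in[simp]: "v \<in> C \<Longrightarrow> a \<cdot> v \<in> C" using amod unfolding is_amod_def by blast
lemma act_add: "v \<in> C \<Longrightarrow> (a + b) \<cdot> v = a \<cdot> v \<oplus> b \<cdot> v" using amod unfolding is_amod_def by blast
lemma act_dist: "v \<in> C \<Longrightarrow> w \<in> C \<Longrightarrow> a \<cdot> (v \<oplus> w) = a \<cdot> v \<oplus> a \<cdot> w" using amod unfolding is_amod_def by blast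
lemma act_mult: "v \<in> C \<Longrightarrow> (a * b) \<cdot> v = a \<cdot> (b \<cdot> v)" using amod unfolding is_amod_def by blast
lemma act_one[simp]: "v \<in> C \<Longrightarrow> 1 \<cdot> v = v" using amod unfolding is_amod_def by blast

lemma cancel: assumes "x \<in> C" "x \<oplus> x = x" shows "x = z"
proof -
  obtain y where y: "y \<in> C" "x \<oplus> y = z" using inv_ex assms(1) by blast
  have "x \<oplus> (x \<oplus> y) = (x \<oplus> x) \<oplus> y" using assoc[OF assms(1) assms(1) y(1)] by (rule sym)
  then have "x \<oplus> z = z" using y assms by simp
  then show ?thesis using assms by simp
qed

lemma act_zero_l[simp]: "v \<in> C \<Longrightarrow> 0 \<cdot> v = z"
  by (rule cancel) (auto simp: act_add[symmetric])

lemma act_zero_r[simp]: "a \<cdot> z = z"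
  by (rule cancel) (auto simp: act_dist[symmetric])

lemma neg_r: "v \<in> C \<Longrightarrow> v \<oplus> (-1) \<cdot> v = z"
proof -
  assume v: "v \<in> C"
  have "v \<oplus> (-1) \<cdot> v = 1 \<cdot> v \<oplus> (-1) \<cdot> v" using v by simp
  also have "\<dots> = (1 + -1) \<cdot> v" using v act_add[of v 1 "-1"] by simp
  finally show ?thesis using v by simp
qed


lemma swap4: "a \<in> C \<Longrightarrow> b \<in> C \<Longrightarrow> c \<in> C \<Longrightarrow> d \<in> C \<Longrightarrow> (a \<oplus> b) \<oplus> (c \<oplus> d) = (a \<oplus> c) \<oplus> (b \<oplus> d)"
proof -
  assume h: "a \<in> C" "b \<in> C" "c \<in> C" "d \<in> C"
  have "(a \<oplus> b) \<oplus> (c \<oplus> d) = a \<oplus> (b \<oplus> (c \<oplus> d))" using h by (simp add: assoc)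
  also have "b \<oplus> (c \<oplus> d) = (b \<oplus> c) \<oplus> d" using h by (simp add: assoc)
  also have "b \<oplus> c = c \<oplus> b" using h by (simp add: comm)
  also have "(c \<oplus> b) \<oplus> d = c \<oplus> (b \<oplus> d)" using h by (simp add: assoc)
  also have "a \<oplus> (c \<oplus> (b \<oplus> d)) = (a \<oplus> c) \<oplus> (b \<oplus> d)" using h by (simp add: assoc)
  finally show ?thesis .
qed

lemma lsum_in[simp]: "set xs \<subseteq> C \<Longrightarrow> lsum V xs \<in> C"
  by (induction xs) auto

lemma lsum_append: "set xs \<subseteq> C \<Longrightarrow> set ys \<subseteq> C \<Longrightarrow> lsum V (xs @ ys) = lsum V xs \<oplus> lsum V ys"
  by (induction xs) (auto simp: assoc)

lemma lsum_zeros: "\<forall>x\<in>set xs. x = z \<Longrightarrow> lsum V xs = z"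
  by (induction xs) auto

lemma act_lsum: "set xs \<subseteq> C \<Longrightarrow> a \<cdot> lsum V xs = lsum V (map (\<lambda>x. a \<cdot> x) xs)"
  by (induction xs) (auto simp: act_dist)

lemma sum_act: "v \<in> C \<Longrightarrow> (sum_list (map b is)) \<cdot> v = lsum V (map (\<lambda>i. b i \<cdot> v) is)"
  by (induction "is") (auto simp: act_add)

lemma pw: "\<forall>i\<in>set us. p i \<in> C \<Longrightarrow> \<forall>i\<in>set us. q i \<in> C \<Longrightarrow>
   lsum V (map p us) \<oplus> lsum V (map q us) = lsum V (map (\<lambda>i. p i \<oplus> q i) us)"
proof (induction us)
  case Nil then show ?case by simp
next
  case (Cons u us)
  then show ?case by (simp add: swap4 image_subset_iff)
qed

lemma ins: "d \<in> set us \<Longrightarrow> distinct us \<Longrightarrow> \<forall>i\<in>set us. h i \<in> C \<Longrightarrow> x \<in> C \<Longrightarrow>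
   x \<oplus> lsum V (map h us) = lsum V (map (h(d := x \<oplus> h d)) us)"
proof (induction us)
  case Nil then show ?case by simp
next
  case (Cons u us)
  show ?case
  proof (cases "d = u")
    case True
    have m: "map (h(d := x \<oplus> h d)) us = map h us" using True Cons.prems by (metis map_fun_upd distinct.simps(2))
    have "x \<oplus> lsum V (map h (u # us)) = (x \<oplus> h u) \<oplus> lsum V (map h us)"
      using Cons.prems by (simp add: assoc image_subset_iff)
    also have "\<dots> = lsum V (map (h(d := x \<oplus> h d)) (u # us))"
      unfolding list.map lsum.simps m using True by simp
    finally show ?thesis .
  next
    case False
    then have "x \<oplus> lsum V (map h (u # us)) = h u \<oplus> (x \<oplus> lsum V (map h us))"
    proof -
      have hu: "h u \<in> C" and L: "lsum V (map h us) \<in> C" and x: "x \<in> C"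
        using Cons.prems by (auto simp: image_subset_iff)
      have "x \<oplus> (h u \<oplus> lsum V (map h us)) = (x \<oplus> h u) \<oplus> lsum V (map h us)" using hu L x by (simp add: assoc)
      also have "x \<oplus> h u = h u \<oplus> x" using x hu by (rule comm)
      also have "(h u \<oplus> x) \<oplus> lsum V (map h us) = h u \<oplus> (x \<oplus> lsum V (map h us))" using hu L x by (simp add: assoc)
      finally show ?thesis by simp
    qed
    then show ?thesis using False Cons by simp
  qed
qed

lemma zext: "distinct cs \<Longrightarrow> distinct us \<Longrightarrow> set cs \<subseteq> set us \<Longrightarrow> \<forall>i\<in>set cs. g i \<in> C \<Longrightarrow>
   lsum V (map g cs) = lsum V (map (\<lambda>i. if i \<in> set cs then g i else z) us)"
proof (induction cs)
  case Nil then show ?case by (simp add: lsum_zeros)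
next
  case (Cons c cs)
  let ?g = "\<lambda>i. if i \<in> set cs then g i else z"
  have "lsum V (map g (c # cs)) = g c \<oplus> lsum V (map ?g us)" using Cons by simp
  also have "\<dots> = lsum V (map (?g(c := g c \<oplus> ?g c)) us)"
    using Cons.prems by (intro ins) auto
  also have "\<dots> = lsum V (map (\<lambda>i. if i \<in> set (c # cs) then g i else z) us)"
    using Cons.prems by (intro arg_cong[where f="lsum V"] map_cong) auto
  finally show ?case .
qed

end



definition Sp :: "('a::{ring,monoid_mult}, 'v) amod \<Rightarrow> ('i \<Rightarrow> 'v set) \<Rightarrow> 'i set \<Rightarrow> 'v set" where
  "Sp V F U = {lsum V (map f is) | is f. distinct is \<and> set is \<subseteq> U \<and> (\<forall>i\<in>set is. f i \<in> F i)}"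

locale dsl = amodl V for V :: "('a::{ring,monoid_mult}, 'v) amod" +
  fixes K :: "'i set" and F :: "'i \<Rightarrow> 'v set"
  assumes Fsub: "i \<in> K \<Longrightarrow> F i \<subseteq> C"
    and F0: "i \<in> K \<Longrightarrow> z \<in> F i"
    and Fadd: "i \<in> K \<Longrightarrow> x \<in> F i \<Longrightarrow> y \<in> F i \<Longrightarrow> x \<oplus> y \<in> F i"
    and Fneg: "i \<in> K \<Longrightarrow> x \<in> F i \<Longrightarrow> (-1) \<cdot> x \<in> F i"
begin

lemma Fin: "i \<in> K \<Longrightarrow> x \<in> F i \<Longrightarrow> x \<in> C" using Fsub by blast

lemma S_zero[simp]: "z \<in> Sp V F U"
  unfolding Sp_def by (rule CollectI, rule exI[of _ "[]"]) auto

lemma S_single: "i \<in> U \<Longrightarrow> x \<in> F i \<Longrightarrow> U \<subseteq> K \<Longrightarrow> x \<in> Sp V F U"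
proof -
  assume h: "i \<in> U" "x \<in> F i" "U \<subseteq> K"
  then have "x \<in> C" using Fin by blast
  then show ?thesis unfolding Sp_def using h by (intro CollectI exI[of _ "[i]"] exI[of _ "\<lambda>_. x"]) auto
qed

lemma S_sub: "U \<subseteq> K \<Longrightarrow> Sp V F U \<subseteq> C"
  unfolding Sp_def by (auto intro!: lsum_in) (meson Fin subsetD)

lemma S_mono: "U \<subseteq> U' \<Longrightarrow> Sp V F U \<subseteq> Sp V F U'"
  unfolding Sp_def by blast

lemma zext_F: assumes "distinct cs" "set cs \<subseteq> set us" "set us \<subseteq> K" "\<forall>i\<in>set cs. g i \<in> F i"
  shows "\<forall>i\<in>set us. (if i \<in> set cs then g i else z) \<in> F i"
  using assms F0 by auto

lemma S_add: assumes U: "U \<subseteq> K" and s: "s \<in> Sp V F U" and t: "t \<in> Sp V F U"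
  shows "s \<oplus> t \<in> Sp V F U"
proof -
  obtain cs g where cs: "distinct cs" "set cs \<subseteq> U" "\<forall>i\<in>set cs. g i \<in> F i" "s = lsum V (map g cs)"
    using s unfolding Sp_def by blast
  obtain ts h where ts: "distinct ts" "set ts \<subseteq> U" "\<forall>i\<in>set ts. h i \<in> F i" "t = lsum V (map h ts)"
    using t unfolding Sp_def by blast
  define us where "us = remdups (cs @ ts)"
  have us: "distinct us" "set us \<subseteq> U" "set cs \<subseteq> set us" "set ts \<subseteq> set us" using cs ts unfolding us_def by auto
  define g' where "g' = (\<lambda>i. if i \<in> set cs then g i else z)"
  define h' where "h' = (\<lambda>i. if i \<in> set ts then h i else z)"
  have gC: "\<forall>i\<in>set cs. g i \<in> C" using cs U Fin by blast
  have hC: "\<forall>i\<in>set ts. h i \<in> C" using ts U Fin by blast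
  have g'F: "\<forall>i\<in>set us. g' i \<in> F i" unfolding g'_def using zext_F[of cs us g] cs us U by auto
  have h'F: "\<forall>i\<in>set us. h' i \<in> F i" unfolding h'_def using zext_F[of ts us h] ts us U by auto
  have "s = lsum V (map g' us)" unfolding g'_def cs(4) using cs us U gC by (intro zext) auto
  moreover have "t = lsum V (map h' us)" unfolding h'_def ts(4) using ts us U hC by (intro zext) auto
  moreover have g'C: "\<forall>i\<in>set us. g' i \<in> C" using g'F us U Fin by blast
  moreover have h'C: "\<forall>i\<in>set us. h' i \<in> C" using h'F us U Fin by blast
  ultimately have "s \<oplus> t = lsum V (map (\<lambda>i. g' i \<oplus> h' i) us)"
    using pw by simp
  moreover have "\<forall>i\<in>set us. g' i \<oplus> h' i \<in> F i" using g'F h'F us U Fadd by blast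
  ultimately show ?thesis unfolding Sp_def using us by blast
qed

lemma S_lsum: "U \<subseteq> K \<Longrightarrow> set xs \<subseteq> Sp V F U \<Longrightarrow> lsum V xs \<in> Sp V F U"
  by (induction xs) (auto intro: S_add)

lemma S_filter: "U \<subseteq> K \<Longrightarrow> set cs \<subseteq> K \<Longrightarrow> distinct cs \<Longrightarrow> \<forall>i\<in>set cs. g i \<in> F i \<Longrightarrow>
   \<forall>i\<in>set cs. i \<notin> U \<longrightarrow> g i = z \<Longrightarrow> lsum V (map g cs) \<in> Sp V F U"
proof (induction cs)
  case Nil then show ?case by simp
next
  case (Cons c cs)
  then have r: "lsum V (map g cs) \<in> Sp V F U" by simp
  show ?case
  proof (cases "c \<in> U")
    case True
    have gcS: "g c \<in> Sp V F U" using True Cons.prems by (intro S_single) auto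
    show ?thesis using S_add[OF _ gcS r] Cons.prems by auto
  next
    case False
    have "lsum V (map g cs) \<in> C" using r S_sub Cons.prems by blast
    then show ?thesis using Cons.prems False r by simp
  qed
qed

lemma DS_unique:
  assumes ds: "is_direct_sum V K F"
    and cs: "distinct cs" "set cs \<subseteq> K" "\<forall>i\<in>set cs. g i \<in> F i"
    and ts: "distinct ts" "set ts \<subseteq> K" "\<forall>i\<in>set ts. h i \<in> F i"
    and eq: "lsum V (map g cs) = lsum V (map h ts)"
    and i: "i \<in> set cs" "i \<notin> set ts"
  shows "g i = z"
proof -
  define us where "us = remdups (cs @ ts)"
  have us: "distinct us" "set us \<subseteq> K" "set cs \<subseteq> set us" "set ts \<subseteq> set us" using cs ts unfolding us_def by auto
  define nh where "nh = (\<lambda>i. (-1) \<cdot> h i)"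
  have nhF: "\<forall>i\<in>set ts. nh i \<in> F i" unfolding nh_def using ts Fneg by auto
  define g' where "g' = (\<lambda>i. if i \<in> set cs then g i else z)"
  define h' where "h' = (\<lambda>i. if i \<in> set ts then nh i else z)"
  have g'F: "\<forall>i\<in>set us. g' i \<in> F i" unfolding g'_def using zext_F[of cs us g] cs us by auto
  have h'F: "\<forall>i\<in>set us. h' i \<in> F i" unfolding h'_def using zext_F[of ts us nh] ts us nhF by auto
  have hC: "\<forall>i\<in>set ts. h i \<in> C" using ts Fin by blast
  have gC: "\<forall>i\<in>set cs. g i \<in> C" using cs Fin by blast
  have nhC: "\<forall>i\<in>set ts. nh i \<in> C" using ts nhF Fin by blast
  have "lsum V (map h ts) \<oplus> lsum V (map nh ts) = lsum V (map (\<lambda>i. h i \<oplus> nh i) ts)"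
    using hC unfolding nh_def by (intro pw) auto
  also have "\<dots> = z" using hC unfolding nh_def by (intro lsum_zeros) (auto simp: neg_r)
  finally have 1: "lsum V (map h ts) \<oplus> lsum V (map nh ts) = z" .
  have "lsum V (map g cs) = lsum V (map g' us)" unfolding g'_def using cs us gC by (intro zext) auto
  moreover have "lsum V (map nh ts) = lsum V (map h' us)" unfolding h'_def using ts us nhC by (intro zext) auto
  ultimately have "lsum V (map (\<lambda>i. g' i \<oplus> h' i) us) = z"
    using 1 eq g'F h'F us by (subst pw[symmetric]) (auto dest: Fin simp: subset_iff)
  moreover have "\<forall>i\<in>set us. g' i \<oplus> h' i \<in> F i" using g'F h'F us by (auto intro: Fadd)
  moreover have dsu: "\<forall>is f. distinct is \<and> set is \<subseteq> K \<and> (\<forall>i\<in>set is. f i \<in> F i)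
                \<and> lsum V (map f is) = z \<longrightarrow> (\<forall>i\<in>set is. f i = z)" using ds unfolding is_direct_sum_def by blast
  ultimately have "\<forall>j\<in>set us. g' j \<oplus> h' j = z" using us spec[OF spec[OF dsu, of us], of "\<lambda>i. g' i \<oplus> h' i"] by blast
  then have "g' i \<oplus> h' i = z" using i us by auto
  moreover have "g i \<in> C" using i cs Fin by blast
  ultimately show ?thesis using i cs unfolding g'_def h'_def by auto
qed

lemma S_unique:
  assumes ds: "is_direct_sum V K F" and U: "U \<subseteq> K" and c: "c \<in> K" "c \<notin> U"
    and u: "u \<in> F c" "u \<in> Sp V F U"
  shows "u = z"
proof -
  obtain ts h where ts: "distinct ts" "set ts \<subseteq> U" "\<forall>i\<in>set ts. h i \<in> F i" "u = lsum V (map h ts)"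
    using u unfolding Sp_def by blast
  have "lsum V (map (\<lambda>_. u) [c]) = lsum V (map h ts)" using ts u c Fin by simp
  then show ?thesis using DS_unique[OF ds, of "[c]" "\<lambda>_. u" ts h c] ts u c U by auto
qed

end



lemma ideal_prod_mono: "x \<in> ideal_prod I m \<Longrightarrow> I \<subseteq> I' \<Longrightarrow> x \<in> ideal_prod I' m"
  by (induction rule: ideal_prod.induct) (auto intro: ideal_prod.intros)

definition rclosed :: "'a::{ring,monoid_mult} set \<Rightarrow> 'a set \<Rightarrow> bool" where
  "rclosed G I \<longleftrightarrow> I \<subseteq> G \<and> 0 \<in> I \<and> (\<forall>x\<in>I. \<forall>y\<in>I. x + y \<in> I) \<and> (\<forall>x\<in>I. \<forall>g\<in>G. x * g \<in> I)"

definition galg :: "'a::{ring,monoid_mult} set \<Rightarrow> bool" where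
  "galg G \<longleftrightarrow> 1 \<in> G \<and> 0 \<in> G \<and> (\<forall>x\<in>G. \<forall>y\<in>G. x + y \<in> G \<and> x * y \<in> G) \<and> (\<forall>x\<in>G. - x \<in> G)"

lemma ideal_prod_sub: "x \<in> ideal_prod I m \<Longrightarrow> rclosed G I \<Longrightarrow> m \<subseteq> G \<Longrightarrow> x \<in> I"
  by (induction rule: ideal_prod.induct) (auto simp: rclosed_def)

lemma ideal_prod_rclosed:
  assumes G: "galg G" and I: "rclosed G I" and m: "is_ideal G m"
  shows "rclosed G (ideal_prod I m)"
proof -
  have mG: "m \<subseteq> G" using m unfolding is_ideal_def by blast
  have 1: "x \<in> G" if "x \<in> ideal_prod I m" for x
    using that by (induction rule: ideal_prod.induct) (use G I mG in \<open>auto simp: galg_def rclosed_def\<close>)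
  have 2: "x * g \<in> ideal_prod I m" if "x \<in> ideal_prod I m" "g \<in> G" for x g
    using that
  proof (induction rule: ideal_prod.induct)
    case ip_zero then show ?case by (simp add: ideal_prod.ip_zero)
  next
    case (ip_prod x y)
    have "y * g \<in> m" using m ip_prod unfolding is_ideal_def by blast
    then show ?case using ip_prod by (metis ideal_prod.ip_prod mult.assoc)
  next
    case (ip_add a b)
    then show ?case by (simp add: distrib_right ideal_prod.ip_add)
  qed
  show ?thesis unfolding rclosed_def using 1 2 by (auto intro: ideal_prod.intros)
qed

lemma W_rclosed: "I \<in> Wset G B \<Longrightarrow> galg G \<Longrightarrow> \<forall>m\<in>B. is_ideal G m \<Longrightarrow> rclosed G I"
proof (induction rule: Wset.induct)
  case W_empty then show ?case unfolding rclosed_def galg_def by auto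
next
  case (W_step I m) then show ?case using ideal_prod_rclosed by blast
qed

lemma W_common: "I \<in> Wset G B \<Longrightarrow> J \<in> Wset G B \<Longrightarrow> galg G \<Longrightarrow> \<forall>m\<in>B. is_ideal G m \<Longrightarrow>
   \<exists>K\<in>Wset G B. K \<subseteq> I \<and> K \<subseteq> J"
proof (induction rule: Wset.induct)
  case W_empty then show ?case using W_rclosed[of J G B] unfolding rclosed_def by blast
next
  case (W_step I m)
  then obtain K where K: "K \<in> Wset G B" "K \<subseteq> I" "K \<subseteq> J" by blast
  have rK: "rclosed G K" using W_rclosed K W_step by blast
  have mI: "is_ideal G m" using W_step.hyps(2) W_step.prems(3) by (rule bspec[rotated])
  have mG: "m \<subseteq> G" using mI unfolding is_ideal_def by (rule conjunct1)
  have "ideal_prod K m \<in> Wset G B" using K W_step by (simp add: Wset.W_step)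
  moreover have "ideal_prod K m \<subseteq> ideal_prod I m" using K ideal_prod_mono by blast
  moreover have "ideal_prod K m \<subseteq> J" using ideal_prod_sub[OF _ rK mG] K by blast
  ultimately show ?case by blast
qed

lemma lg_left: "x \<in> left_gen N \<Longrightarrow> a * x \<in> left_gen N"
proof (induction rule: left_gen.induct)
  case lg_zero then show ?case by (simp add: left_gen.lg_zero)
next
  case (lg_prod x b) then show ?case by (metis left_gen.lg_prod mult.assoc)
next
  case (lg_add u v) then show ?case by (simp add: distrib_left left_gen.lg_add)
qed

lemma lg_neg: "x \<in> left_gen N \<Longrightarrow> - x \<in> left_gen N"
  using lg_left[of x N "-1"] by simp

lemma lg_diff: "x \<in> left_gen N \<Longrightarrow> y \<in> left_gen N \<Longrightarrow> x - y \<in> left_gen N"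
  using lg_neg left_gen.lg_add by (metis diff_conv_add_uminus)

lemma lg_ip: assumes "1 \<in> G" shows "left_gen (ideal_prod G m) = left_gen m"
proof
  have a: "x \<in> left_gen m" if "x \<in> ideal_prod G m" for x
    using that by (induction rule: ideal_prod.induct) (auto intro: left_gen.intros)
  show "left_gen (ideal_prod G m) \<subseteq> left_gen m"
  proof
    fix x assume "x \<in> left_gen (ideal_prod G m)"
    then show "x \<in> left_gen m"
      by (induction rule: left_gen.induct) (auto intro: left_gen.intros lg_left a)
  qed
  show "left_gen m \<subseteq> left_gen (ideal_prod G m)"
  proof
    fix x assume "x \<in> left_gen m"
    then show "x \<in> left_gen (ideal_prod G m)"
    proof (induction rule: left_gen.induct)
      case (lg_prod x a)
      have "x \<in> ideal_prod G m" using ideal_prod.ip_prod[OF assms lg_prod] by simp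
      then show ?case by (rule left_gen.lg_prod)
    qed (auto intro: left_gen.intros)
  qed
qed

definition coset :: "'a::{ring,monoid_mult} set \<Rightarrow> 'a \<Rightarrow> 'a set" where
  "coset L b = (\<lambda>n. b + n) ` L"

lemma coset_mem: "x \<in> coset (left_gen N) b \<longleftrightarrow> x - b \<in> left_gen N"
proof
  assume "x \<in> coset (left_gen N) b"
  then obtain n where "n \<in> left_gen N" "x = b + n" unfolding coset_def by blast
  then show "x - b \<in> left_gen N" by simp
next
  assume h: "x - b \<in> left_gen N"
  have "x = b + (x - b)" by (simp add: algebra_simps)
  then show "x \<in> coset (left_gen N) b" unfolding coset_def using h by (rule image_eqI)
qed

lemma carrier_quot: "mcarrier (quot_mod L) = range (coset L)"
  unfolding quot_mod_def coset_def by simp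

lemma q_add: "madd (quot_mod (left_gen N)) (coset (left_gen N) a) (coset (left_gen N) b) = coset (left_gen N) (a + b)"
proof -
  let ?L = "left_gen N"
  have "{x + y |x y. x \<in> coset ?L a \<and> y \<in> coset ?L b} = coset ?L (a + b)"
  proof (intro set_eqI iffI)
    fix w assume "w \<in> {x + y |x y. x \<in> coset ?L a \<and> y \<in> coset ?L b}"
    then obtain x y where "w = x + y" "x - a \<in> ?L" "y - b \<in> ?L" by (auto simp: coset_mem)
    then have e: "w - (a + b) = (x - a) + (y - b)" by (simp add: algebra_simps)
    have "(x - a) + (y - b) \<in> ?L" using \<open>x - a \<in> ?L\<close> \<open>y - b \<in> ?L\<close> by (rule left_gen.lg_add)
    then show "w \<in> coset ?L (a + b)" unfolding coset_mem e .
  next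
    fix w assume "w \<in> coset ?L (a + b)"
    then have "w - b \<in> coset ?L a" "b \<in> coset ?L b"
      by (auto simp: coset_mem algebra_simps intro: left_gen.lg_zero)
    then show "w \<in> {x + y |x y. x \<in> coset ?L a \<and> y \<in> coset ?L b}"
      by (metis (mono_tags, lifting) diff_add_cancel mem_Collect_eq)
  qed
  then show ?thesis unfolding quot_mod_def by simp
qed

lemma q_zero: "mzero (quot_mod (left_gen N)) = coset (left_gen N) 0"
  unfolding quot_mod_def by (auto simp: coset_def)

lemma q_lsum: "lsum (quot_mod (left_gen N)) (map (\<lambda>i. coset (left_gen N) (b i)) is) = coset (left_gen N) (sum_list (map b is))"
  by (induction "is") (auto simp: q_add q_zero)

lemma q_eq: "coset (left_gen N) a = coset (left_gen N) s \<Longrightarrow> a - s \<in> left_gen N"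
proof -
  assume "coset (left_gen N) a = coset (left_gen N) s"
  moreover have "a \<in> coset (left_gen N) a" by (simp add: coset_mem left_gen.lg_zero)
  ultimately show ?thesis by (simp add: coset_mem)
qed

lemma q_act: "mact (quot_mod (left_gen N)) x (coset (left_gen N) b) = left_gen N \<Longrightarrow> x * b \<in> left_gen N"
proof -
  assume h: "mact (quot_mod (left_gen N)) x (coset (left_gen N) b) = left_gen N"
  have "b \<in> coset (left_gen N) b" by (simp add: coset_mem left_gen.lg_zero)
  moreover have "x * b - x * b \<in> left_gen N" by (simp add: left_gen.lg_zero)
  ultimately have "\<exists>c\<in>coset (left_gen N) b. x * b - x * c \<in> left_gen N" by blast
  then have "x * b \<in> mact (quot_mod (left_gen N)) x (coset (left_gen N) b)"
    unfolding quot_mod_def by simp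
  then show ?thesis using h by simp
qed

lemma q_eq0: "coset (left_gen N) b = left_gen N \<Longrightarrow> b \<in> left_gen N"
  using q_eq[of N b 0] q_zero[of N] unfolding quot_mod_def by simp

lemma restr_sel: "mcarrier (V\<lparr>mcarrier := X\<rparr>) = X" "madd (V\<lparr>mcarrier := X\<rparr>) = madd V"
  "mzero (V\<lparr>mcarrier := X\<rparr>) = mzero V" "mact (V\<lparr>mcarrier := X\<rparr>) = mact V"
  by simp_all

lemma lsum_restr: "lsum (V\<lparr>mcarrier := X\<rparr>) xs = lsum V xs"
  by (induction xs) auto

lemma blk_restr: "X \<subseteq> mcarrier V \<Longrightarrow> blk G (V\<lparr>mcarrier := X\<rparr>) B = blk G V B \<inter> X"
  unfolding blk_def by auto




lemma q_mzero: "mzero (quot_mod L) = L" unfolding quot_mod_def by simp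

lemma decomp_quot:
  assumes ds: "is_direct_sum (quot_mod (left_gen N)) K (blk G (quot_mod (left_gen N)))"
  shows "\<exists>is b. distinct is \<and> set is \<subseteq> K \<and> a - sum_list (map b is) \<in> left_gen N \<and>
     (\<forall>i\<in>set is. b i \<in> left_gen N \<or> (blk G (quot_mod (left_gen N)) i \<noteq> {mzero (quot_mod (left_gen N))} \<and>
         (\<exists>J\<in>Wset G i. \<forall>x\<in>J. x * b i \<in> left_gen N)))"
proof -
  let ?L = "left_gen N" let ?X = "quot_mod (left_gen N)"
  have ca: "coset ?L a \<in> mcarrier ?X" by (simp add: carrier_quot)
  have "\<forall>v\<in>mcarrier ?X. \<exists>is f. distinct is \<and> set is \<subseteq> K \<and> (\<forall>i\<in>set is. f i \<in> blk G ?X i)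
                                \<and> v = lsum ?X (map f is)" using ds unfolding is_direct_sum_def by (rule conjunct1[OF conjunct2])
  then have "\<exists>is f. distinct is \<and> set is \<subseteq> K \<and> (\<forall>i\<in>set is. f i \<in> blk G ?X i)
                                \<and> coset ?L a = lsum ?X (map f is)" using ca by (rule bspec)
  then obtain "is" f where isf0: "distinct is \<and> set is \<subseteq> K \<and> (\<forall>i\<in>set is. f i \<in> blk G ?X i)
                                \<and> coset ?L a = lsum ?X (map f is)" by (elim exE) (rule that)
  have isf: "distinct is" "set is \<subseteq> K" "\<forall>i\<in>set is. f i \<in> blk G ?X i"
    "coset ?L a = lsum ?X (map f is)" using isf0 by auto
  have "\<forall>i\<in>set is. \<exists>c. f i = coset ?L c" using isf(3) unfolding blk_def carrier_quot by blast
  then obtain b where b: "\<forall>i\<in>set is. f i = coset ?L (b i)" by metis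
  have "map f is = map (\<lambda>i. coset ?L (b i)) is" using b by simp
  then have "coset ?L a = coset ?L (sum_list (map b is))" using isf(4) q_lsum by metis
  then have 1: "a - sum_list (map b is) \<in> ?L" by (rule q_eq)
  have 2: "b i \<in> ?L \<or> (blk G ?X i \<noteq> {mzero ?X} \<and> (\<exists>J\<in>Wset G i. \<forall>x\<in>J. x * b i \<in> ?L))" if i: "i \<in> set is" for i
  proof (cases "blk G ?X i = {mzero ?X}")
    case True
    then have "coset ?L (b i) = ?L" using isf(3) b i by (auto simp: q_mzero)
    then show ?thesis using q_eq0 by blast
  next
    case False
    obtain J where J: "J \<in> Wset G i" "\<forall>x\<in>J. mact ?X x (coset ?L (b i)) = ?L"
      using isf(3) b i unfolding blk_def q_mzero by auto
    have "\<forall>x\<in>J. x * b i \<in> ?L" using J(2) q_act by blast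
    then have "\<exists>J\<in>Wset G i. \<forall>x\<in>J. x * b i \<in> ?L" using J(1) by blast
    then show ?thesis using False by blast
  qed
  show ?thesis using isf 1 2 by blast
qed

lemma galg_sub: "is_subalgebra smult G \<Longrightarrow> galg G"
  unfolding is_subalgebra_def galg_def by blast

lemma class_ideals: "equiv (cfs smult G) R \<Longrightarrow> B \<in> classes smult G R \<Longrightarrow> m \<in> B \<Longrightarrow> is_ideal G m"
  unfolding classes_def cfs_def max_ideal_def
  by (metis (no_types, lifting) Image_singleton_iff equiv_class_eq_iff mem_Collect_eq quotientE)

lemma blk_act:
  assumes V: "is_amod V" and G: "galg G" and Bid: "\<forall>m\<in>B. is_ideal G m"
    and x: "x \<in> G" and v: "v \<in> blk G V B"
  shows "mact V x v \<in> blk G V B"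
proof -
  interpret amodl V by (rule amodl.intro[OF V])
  obtain I where I: "I \<in> Wset G B" "\<forall>y\<in>I. y \<cdot> v = z" "v \<in> C" using v unfolding blk_def by blast
  have "rclosed G I" using W_rclosed I G Bid by blast
  then have "\<forall>y\<in>I. y \<cdot> (x \<cdot> v) = z" using I x by (simp add: act_mult[symmetric] rclosed_def)
  then show ?thesis using I unfolding blk_def by auto
qed

lemma blk_dsl:
  assumes V: "is_amod V" and G: "galg G" and K: "\<forall>B\<in>K. \<forall>m\<in>B. is_ideal G m"
  shows "dsl V K (blk G V)"
proof -
  interpret amodl V by (rule amodl.intro[OF V])
  have act: "x \<cdot> v \<in> blk G V B" if hB: "B \<in> K" "x \<in> G" "v \<in> blk G V B" for B x v
  proof -
    obtain I where I: "I \<in> Wset G B" "\<forall>y\<in>I. y \<cdot> v = z" "v \<in> C" using hB unfolding blk_def by blast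
    have "rclosed G I" using W_rclosed I G K hB by blast
    then have "\<forall>y\<in>I. y \<cdot> (x \<cdot> v) = z" using I hB by (simp add: act_mult[symmetric] rclosed_def)
    then show ?thesis using I unfolding blk_def by auto
  qed
  show ?thesis
  proof
    fix i assume "i \<in> K" then show "blk G V i \<subseteq> C" unfolding blk_def by auto
  next
    fix i assume "i \<in> K" then show "z \<in> blk G V i" unfolding blk_def by (auto intro: Wset.W_empty)
  next
    fix i x y assume i: "i \<in> K" and x: "x \<in> blk G V i" and y: "y \<in> blk G V i"
    obtain I where I: "I \<in> Wset G i" "\<forall>u\<in>I. u \<cdot> x = z" "x \<in> C" using x unfolding blk_def by blast
    obtain J where J: "J \<in> Wset G i" "\<forall>u\<in>J. u \<cdot> y = z" "y \<in> C" using y unfolding blk_def by blast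
    obtain L where L: "L \<in> Wset G i" "L \<subseteq> I" "L \<subseteq> J" using W_common[OF I(1) J(1) G] K i by blast
    have "\<forall>u\<in>L. u \<cdot> (x \<oplus> y) = z"
    proof
      fix u assume "u \<in> L"
      then have "u \<cdot> x = z" "u \<cdot> y = z" using L I J by blast+
      then show "u \<cdot> (x \<oplus> y) = z" using I J by (simp add: act_dist)
    qed
    then show "x \<oplus> y \<in> blk G V i" using L I J unfolding blk_def by auto
  next
    fix i x assume "i \<in> K" "x \<in> blk G V i"
    moreover have "-1 \<in> G" using G unfolding galg_def by blast
    ultimately show "(-1) \<cdot> x \<in> blk G V i" using act by blast
  qed
qed




lemma lemmaB:
  assumes sub: "is_subalgebra smult G" and eqv: "equiv (cfs smult G) R"
    and hcb: "HC_block_subalgebra smult G R"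
    and V: "is_amod V" and ds: "is_direct_sum V (classes smult G R) (blk G V)"
    and B: "B \<in> classes smult G R" and I: "I \<in> Wset G B"
  shows "v \<in> mcarrier V \<Longrightarrow> (\<forall>x\<in>I. mact V x v = mzero V) \<Longrightarrow>
    mact V a v \<in> Sp V (blk G V) {C. (B, C) \<in> prec_base smult G R}"
  using I
proof (induction arbitrary: v a rule: Wset.induct)
  let ?K = "classes smult G R"
  let ?T = "{C. (B, C) \<in> prec_base smult G R}"
  have G: "galg G" using sub by (rule galg_sub)
  have Kid: "\<forall>B\<in>?K. \<forall>m\<in>B. is_ideal G m" using class_ideals[OF eqv] by blast
  interpret dsl V ?K "blk G V" using blk_dsl[OF V G Kid] .
  have TK: "?T \<subseteq> ?K" unfolding prec_base_def by auto
  {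
    case (W_empty v a)
    have "1 \<in> G" using G unfolding galg_def by blast
    then have "v = z" using W_empty by (metis act_one)
    then show ?case by simp
  next
    case (W_step I m v a)
    have v: "v \<in> C" using W_step by blast
    have mB: "m \<in> B" using W_step by blast
    have step1: "a \<cdot> (y \<cdot> v) \<in> Sp V (blk G V) ?T" if y: "y \<in> m" for y a
    proof -
      have "\<forall>x\<in>I. x \<cdot> (y \<cdot> v) = z"
      proof
        fix x assume "x \<in> I"
        then have "x * y \<in> ideal_prod I m" using y by (rule ideal_prod.ip_prod)
        then show "x \<cdot> (y \<cdot> v) = z" using W_step v by (simp add: act_mult[symmetric])
      qed
      then show ?thesis using W_step.IH v by simp
    qed
    have step2: "l \<cdot> v \<in> Sp V (blk G V) ?T" if "l \<in> left_gen m" for l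
      using that
    proof (induction rule: left_gen.induct)
      case lg_zero then show ?case using v by simp
    next
      case (lg_prod x a) then show ?case using step1 v by (simp add: act_mult)
    next
      case (lg_add u w) then show ?case using v TK by (simp add: act_add S_add)
    qed
    have "ideal_prod G m \<in> Wset G B" using mB by (simp add: Wset.W_empty Wset.W_step)
    then have "HC smult G R (quot_mod (left_gen (ideal_prod G m)))" using hcb B
      unfolding HC_block_subalgebra_def by blast
    moreover have "left_gen (ideal_prod G m) = left_gen m" using G lg_ip unfolding galg_def by blast
    ultimately have dsX: "is_direct_sum (quot_mod (left_gen m)) ?K (blk G (quot_mod (left_gen m)))"
      unfolding HC_def is_block_module_def by simp
    obtain "is" b where isb0: "distinct is \<and> set is \<subseteq> ?K \<and> a - sum_list (map b is) \<in> left_gen m \<and>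
      (\<forall>i\<in>set is. b i \<in> left_gen m \<or> (blk G (quot_mod (left_gen m)) i \<noteq> {mzero (quot_mod (left_gen m))} \<and>
         (\<exists>J\<in>Wset G i. \<forall>x\<in>J. x * b i \<in> left_gen m)))"
      using decomp_quot[OF dsX, where a=a] by (elim exE) (rule that)
    have isb: "distinct is" "set is \<subseteq> ?K" "a - sum_list (map b is) \<in> left_gen m"
      "\<forall>i\<in>set is. b i \<in> left_gen m \<or> (blk G (quot_mod (left_gen m)) i \<noteq> {mzero (quot_mod (left_gen m))} \<and>
         (\<exists>J\<in>Wset G i. \<forall>x\<in>J. x * b i \<in> left_gen m))"
      using isb0 by auto
    have comp: "b i \<cdot> v \<in> Sp V (blk G V) ?T" if i: "i \<in> set is" for i
    proof (cases "b i \<in> left_gen m")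
      case True then show ?thesis using step2 by blast
    next
      case False
      have d: "b i \<in> left_gen m \<or> (blk G (quot_mod (left_gen m)) i \<noteq> {mzero (quot_mod (left_gen m))} \<and>
         (\<exists>J\<in>Wset G i. \<forall>x\<in>J. x * b i \<in> left_gen m))" using isb(4) i by (rule bspec)
      then have supp: "blk G (quot_mod (left_gen m)) i \<noteq> {mzero (quot_mod (left_gen m))}"
        and "\<exists>J\<in>Wset G i. \<forall>x\<in>J. x * b i \<in> left_gen m" using False by auto
      then obtain J where J: "J \<in> Wset G i" "\<forall>x\<in>J. x * b i \<in> left_gen m" by blast
      have iK: "i \<in> ?K" using isb i by blast
      have iT: "i \<in> ?T" unfolding prec_base_def Supp_def using B iK mB supp by blast
      have JG: "rclosed G J" using W_rclosed[OF J(1) G] Kid iK by blast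
      have bv: "b i \<cdot> v \<in> C" using v by simp
      obtain cs g where csg: "distinct cs" "set cs \<subseteq> ?K" "\<forall>c\<in>set cs. g c \<in> blk G V c"
        "b i \<cdot> v = lsum V (map g cs)"
        using ds bv unfolding is_direct_sum_def by blast
      have gC: "\<forall>c\<in>set cs. g c \<in> C" using csg Fin by blast
      have gz: "g c = z" if c: "c \<in> set cs" "c \<notin> ?T" for c
      proof -
        have kill: "x \<cdot> g c = z" if x: "x \<in> J" for x
        proof -
          have xG: "x \<in> G" using JG x unfolding rclosed_def by blast
          have "x \<cdot> (b i \<cdot> v) \<in> Sp V (blk G V) ?T"
            using step2[OF J(2)[rule_format, OF x]] v by (simp add: act_mult)
          then obtain ts h where ts: "distinct ts" "set ts \<subseteq> ?T" "\<forall>t\<in>set ts. h t \<in> blk G V t"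
            "x \<cdot> (b i \<cdot> v) = lsum V (map h ts)" unfolding Sp_def by blast
          have sgC: "set (map g cs) \<subseteq> C" using gC by auto
          have "x \<cdot> (b i \<cdot> v) = lsum V (map (\<lambda>c. x \<cdot> g c) cs)"
            unfolding csg(4) act_lsum[OF sgC] by (simp add: comp_def)
          moreover have "\<forall>c\<in>set cs. x \<cdot> g c \<in> blk G V c"
            using csg xG blk_act[OF V G] Kid by blast
          ultimately show ?thesis
            using DS_unique[OF ds csg(1,2), of "\<lambda>c. x \<cdot> g c" ts h c] ts c TK by auto
        qed
        have "g c \<in> blk G V i" using kill J gC c unfolding blk_def by auto
        moreover have "g c \<in> blk G V c" using csg c by blast
        moreover have "c \<noteq> i" using c iT by blast
        moreover have cK: "c \<in> ?K" using csg c by blast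
        ultimately show ?thesis
          using DS_unique[OF ds, of "[c]" "\<lambda>_. g c" "[i]" "\<lambda>_. g c" c] iK by auto
      qed
      show ?thesis unfolding csg(4) using TK csg gz by (intro S_filter) auto
    qed
    have "a \<cdot> v = ((a - sum_list (map b is)) + sum_list (map b is)) \<cdot> v" by simp
    also have "\<dots> = (a - sum_list (map b is)) \<cdot> v \<oplus> lsum V (map (\<lambda>i. b i \<cdot> v) is)"
      using v by (simp only: act_add sum_act)
    finally have av: "a \<cdot> v = (a - sum_list (map b is)) \<cdot> v \<oplus> lsum V (map (\<lambda>i. b i \<cdot> v) is)" .
    have "lsum V (map (\<lambda>i. b i \<cdot> v) is) \<in> Sp V (blk G V) ?T" using comp TK by (intro S_lsum) auto
    moreover have "(a - sum_list (map b is)) \<cdot> v \<in> Sp V (blk G V) ?T" using step2 isb(3) by blast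
    ultimately show ?case using av TK S_add by simp
  }
qed




locale setting =
  fixes smult :: "'k::field \<Rightarrow> 'a::{ring,monoid_mult} \<Rightarrow> 'a" and G :: "'a set" and R :: "('a set \<times> 'a set) set"
  assumes sub: "is_subalgebra smult G" and eqv: "equiv (cfs smult G) R"
    and hcb: "HC_block_subalgebra smult G R"
begin

abbreviation "cls \<equiv> classes smult G R"
abbreviation "PB \<equiv> prec_base smult G R"
abbreviation "P \<equiv> prec smult G R"
abbreviation "DL \<equiv> Delta smult G R"
abbreviation "NB \<equiv> Nabla smult G R"

lemma PB_sub: "PB \<subseteq> cls \<times> cls" unfolding prec_base_def by auto

lemma P_sub: "P \<subseteq> cls \<times> cls"
  unfolding prec_def using PB_sub trancl_subset_Sigma[OF PB_sub] by auto

lemma P_trans: "trans P"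
proof -
  have "trans ((PB)\<^sup>+)" by (rule trans_trancl)
  then show ?thesis unfolding prec_def trans_def using trancl_subset_Sigma[OF PB_sub] by blast
qed

lemma equiv_DL: "equiv cls DL"
proof -
  let ?Q = "P \<union> P\<inverse>"
  have Q: "?Q \<subseteq> cls \<times> cls" using P_sub by auto
  have sub: "DL \<subseteq> cls \<times> cls" unfolding Delta_def using trancl_subset_Sigma[OF Q] by auto
  have "sym (?Q\<^sup>+)" by (rule sym_trancl) (auto simp: sym_def)
  then have sym: "sym DL" unfolding Delta_def sym_def by auto
  have "trans (?Q\<^sup>+)" by (rule trans_trancl)
  then have tr: "trans DL" unfolding Delta_def trans_def using trancl_subset_Sigma[OF Q] by blast
  show ?thesis unfolding equiv_def refl_on_def using sub sym tr unfolding Delta_def by auto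
qed

lemma equiv_NB: "equiv cls NB"
proof -
  have sub: "NB \<subseteq> cls \<times> cls" unfolding Nabla_def using P_sub by auto
  have refl: "(x, x) \<in> NB" if "x \<in> cls" for x unfolding Nabla_def prec_def using that by auto
  have sym: "sym NB" unfolding Nabla_def sym_def by auto
  have tr: "trans NB" unfolding Nabla_def using P_trans unfolding trans_def by blast
  show ?thesis unfolding equiv_def refl_on_def using sub refl sym tr by auto
qed

lemma PB_P: "(B, C) \<in> PB \<Longrightarrow> (B, C) \<in> P" unfolding prec_def by auto

lemma PB_DL: "(B, C) \<in> PB \<Longrightarrow> (B, C) \<in> DL" unfolding Delta_def using PB_P by blast

lemma class_of: "D \<in> X // E \<Longrightarrow> equiv X E \<Longrightarrow> i \<in> D \<Longrightarrow> E `` {i} = D"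
  by (metis equiv_class_eq_iff equiv_class_self quotientE quotient_eq_iff)

lemma quot_sub: "D \<in> X // E \<Longrightarrow> equiv X E \<Longrightarrow> D \<subseteq> X"
  by (metis Union_upper equiv_def Union_quotient)

lemma quot_disj: "D \<in> X // E \<Longrightarrow> D' \<in> X // E \<Longrightarrow> equiv X E \<Longrightarrow> D \<noteq> D' \<Longrightarrow> D \<inter> D' = {}"
  using quotient_disj by blast

lemma G: "galg G" using sub by (rule galg_sub)
lemma Kid: "\<forall>B\<in>cls. \<forall>m\<in>B. is_ideal G m" using class_ideals[OF eqv] by blast

end



lemma (in amodl) lsum_concat: "\<forall>xs\<in>set xss. set xs \<subseteq> C \<Longrightarrow> lsum V (concat xss) = lsum V (map (lsum V) xss)"
proof (induction xss)
  case Nil then show ?case by simp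
next
  case (Cons a xss)
  have "set (concat xss) \<subseteq> C" using Cons.prems by auto
  moreover have "set a \<subseteq> C" using Cons.prems by auto
  ultimately show ?case using Cons by (simp add: lsum_append)
qed

lemma distinct_concat_disj:
  "distinct Ds \<Longrightarrow> (\<forall>D\<in>set Ds. distinct (f D) \<and> set (f D) \<subseteq> D) \<Longrightarrow>
   (\<forall>D\<in>set Ds. \<forall>D'\<in>set Ds. D \<noteq> D' \<longrightarrow> D \<inter> D' = {}) \<Longrightarrow> distinct (concat (map f Ds))"
proof (induction Ds)
  case Nil then show ?case by simp
next
  case (Cons D Ds)
  have "set (f D) \<inter> set (concat (map f Ds)) = {}"
  proof -
    have "set (concat (map f Ds)) \<subseteq> \<Union>(set Ds)"
    proof
      fix x assume "x \<in> set (concat (map f Ds))"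
      then obtain D' where "D' \<in> set Ds" "x \<in> set (f D')" by auto
      then show "x \<in> \<Union>(set Ds)" using Cons.prems(2) by auto
    qed
    moreover have "D \<inter> \<Union>(set Ds) = {}" using Cons.prems by auto
    moreover have "set (f D) \<subseteq> D" using Cons.prems(2) by simp
    ultimately show ?thesis by blast
  qed
  then show ?case using Cons by auto
qed

context setting begin

lemma act_closed:
  assumes V: "is_amod V" and ds: "is_direct_sum V cls (blk G V)" and D: "D \<in> cls // DL"
    and s: "s \<in> Sp V (blk G V) D"
  shows "mact V a s \<in> Sp V (blk G V) D"
proof -
  interpret dsl V cls "blk G V" using blk_dsl[OF V G Kid] .
  have DK: "D \<subseteq> cls" using quot_sub[OF D equiv_DL] .
  obtain "is" f where isf: "distinct is" "set is \<subseteq> D" "\<forall>i\<in>set is. f i \<in> blk G V i" "s = lsum V (map f is)"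
    using s unfolding Sp_def by blast
  have fC: "\<forall>i\<in>set is. f i \<in> C" using isf DK Fin by blast
  have sfC: "set (map f is) \<subseteq> C" using fC by auto
  have "a \<cdot> s = lsum V (map (\<lambda>i. a \<cdot> f i) is)" unfolding isf(4) act_lsum[OF sfC] by (simp add: comp_def)
  moreover have "a \<cdot> f i \<in> Sp V (blk G V) D" if i: "i \<in> set is" for i
  proof -
    have iK: "i \<in> cls" using i isf DK by blast
    obtain I where I: "I \<in> Wset G i" "\<forall>x\<in>I. x \<cdot> f i = z" "f i \<in> C" using isf(3) i unfolding blk_def by blast
    have "a \<cdot> f i \<in> Sp V (blk G V) {C. (i, C) \<in> PB}"
      using lemmaB[OF sub eqv hcb V ds iK I(1) I(3) I(2)] .
    moreover have "{C. (i, C) \<in> PB} \<subseteq> D"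
    proof
      fix C assume "C \<in> {C. (i, C) \<in> PB}"
      then have "(i, C) \<in> DL" using PB_DL by blast
      then show "C \<in> D" using class_of[OF D equiv_DL, of i] i isf by blast
    qed
    ultimately show ?thesis using S_mono by blast
  qed
  ultimately show ?thesis using DK by (auto intro!: S_lsum)
qed

lemma VD_submod:
  assumes V: "is_amod V" and ds: "is_direct_sum V cls (blk G V)" and D: "D \<in> cls // DL"
  shows "submod (Sp V (blk G V) D) V"
proof -
  interpret dsl V cls "blk G V" using blk_dsl[OF V G Kid] .
  have DK: "D \<subseteq> cls" using quot_sub[OF D equiv_DL] .
  let ?S = "Sp V (blk G V) D"
  have SC: "?S \<subseteq> C" using S_sub DK by blast
  have ac: "\<And>a s. s \<in> ?S \<Longrightarrow> a \<cdot> s \<in> ?S" using act_closed[OF V ds D] by blast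
  have ad: "\<And>s t. s \<in> ?S \<Longrightarrow> t \<in> ?S \<Longrightarrow> s \<oplus> t \<in> ?S" using S_add DK by blast
  show ?thesis unfolding submod_def is_amod_def
  proof (simp only: restr_sel, intro conjI ballI allI)
    show "z \<in> ?S" by simp
  next
    fix v w assume "v \<in> ?S" "w \<in> ?S" then show "v \<oplus> w \<in> ?S" using ad by blast
  next
    fix u v w assume "u \<in> ?S" "v \<in> ?S" "w \<in> ?S" then show "u \<oplus> v \<oplus> w = u \<oplus> (v \<oplus> w)" using SC assoc by blast
  next
    fix v w assume "v \<in> ?S" "w \<in> ?S" then show "v \<oplus> w = w \<oplus> v" using SC comm by blast
  next
    fix v assume "v \<in> ?S" then show "z \<oplus> v = v" using SC by auto
  next
    fix v assume "v \<in> ?S" then show "\<exists>w\<in>?S. v \<oplus> w = z" using SC ac neg_r by blast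
  next
    fix a v assume "v \<in> ?S" then show "a \<cdot> v \<in> ?S" using ac by blast
  next
    fix a b v assume "v \<in> ?S" then show "(a + b) \<cdot> v = a \<cdot> v \<oplus> b \<cdot> v" using SC act_add by blast
  next
    fix a v w assume "v \<in> ?S" "w \<in> ?S" then show "a \<cdot> (v \<oplus> w) = a \<cdot> v \<oplus> a \<cdot> w" using SC act_dist by blast
  next
    fix a b v assume "v \<in> ?S" then show "(a * b) \<cdot> v = a \<cdot> b \<cdot> v" using SC act_mult by blast
  next
    fix v assume "v \<in> ?S" then show "1 \<cdot> v = v" using SC by auto
  qed (use SC in auto)
qed

end



context setting begin

lemma VD_HC:
  assumes V: "is_amod V" and ds: "is_direct_sum V cls (blk G V)" and D: "D \<in> cls // DL"
  shows "HC_D smult G R D (V\<lparr>mcarrier := Sp V (blk G V) D\<rparr>)"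
proof -
  interpret dsl V cls "blk G V" using blk_dsl[OF V G Kid] .
  have DK: "D \<subseteq> cls" using quot_sub[OF D equiv_DL] .
  let ?S = "Sp V (blk G V) D"
  let ?V = "V\<lparr>mcarrier := ?S\<rparr>"
  have am: "is_amod ?V" using VD_submod[OF V ds D] unfolding submod_def by blast
  have SC0: "?S \<subseteq> C" using S_sub DK by blast
  have b: "blk G ?V i = blk G V i \<inter> ?S" for i using SC0 by (rule blk_restr)
  have ds': "is_direct_sum ?V cls (blk G ?V)"
    unfolding is_direct_sum_def b lsum_restr
  proof (simp only: restr_sel, intro conjI ballI allI impI)
    fix i assume "i \<in> cls" then show "blk G V i \<inter> ?S \<subseteq> ?S" by blast
  next
    fix v assume "v \<in> ?S"
    then obtain "is" f where isf: "distinct is" "set is \<subseteq> D" "\<forall>i\<in>set is. f i \<in> blk G V i" "v = lsum V (map f is)"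
      unfolding Sp_def by blast
    have "\<forall>i\<in>set is. f i \<in> ?S" using isf DK by (auto intro: S_single)
    then show "\<exists>is f. distinct is \<and> set is \<subseteq> cls \<and> (\<forall>i\<in>set is. f i \<in> blk G V i \<inter> ?S) \<and> v = lsum V (map f is)"
      using isf DK by blast
  next
    fix "is" f i assume h: "distinct is \<and> set is \<subseteq> cls \<and> (\<forall>i\<in>set is. f i \<in> blk G V i \<inter> ?S) \<and> lsum V (map f is) = z"
      and i: "i \<in> set is"
    have "\<forall>is f. distinct is \<and> set is \<subseteq> cls \<and> (\<forall>i\<in>set is. f i \<in> blk G V i)
                \<and> lsum V (map f is) = z \<longrightarrow> (\<forall>i\<in>set is. f i = z)" using ds unfolding is_direct_sum_def by blast
    then show "f i = z" using h i by blast
  qed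
  have supp: "Supp smult G R ?V \<subseteq> D"
  proof
    fix B assume "B \<in> Supp smult G R ?V"
    then have BK: "B \<in> cls" and ne: "blk G V B \<inter> ?S \<noteq> {z}" unfolding Supp_def b by auto
    have "z \<in> blk G V B \<inter> ?S" using F0 BK by simp
    then obtain u where u: "u \<in> blk G V B" "u \<in> ?S" "u \<noteq> z" using ne by blast
    show "B \<in> D"
    proof (rule ccontr)
      assume "B \<notin> D"
      then have "u = z" using S_unique[OF ds DK BK _ u(1,2)] by blast
      then show False using u by blast
    qed
  qed
  show ?thesis unfolding HC_D_def HC_def is_block_module_def using am ds' supp by simp
qed

lemma VD_ds:
  assumes V: "is_amod V" and ds: "is_direct_sum V cls (blk G V)"
  shows "is_direct_sum V (cls // DL) (Sp V (blk G V))"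
proof -
  interpret dsl V cls "blk G V" using blk_dsl[OF V G Kid] .
  have DK: "\<And>D. D \<in> cls // DL \<Longrightarrow> D \<subseteq> cls" using quot_sub[OF _ equiv_DL] by blast
  have SC: "\<And>D. D \<in> cls // DL \<Longrightarrow> Sp V (blk G V) D \<subseteq> C" using S_sub DK by blast
  have ex: "distinct cs \<Longrightarrow> set cs \<subseteq> cls \<Longrightarrow> \<forall>c\<in>set cs. f c \<in> blk G V c \<Longrightarrow>
    \<exists>Ds h. distinct Ds \<and> set Ds \<subseteq> cls // DL \<and> (\<forall>D\<in>set Ds. h D \<in> Sp V (blk G V) D)
       \<and> lsum V (map f cs) = lsum V (map h Ds)" for cs f
  proof (induction cs)
    case Nil then show ?case by (intro exI[of _ "[]"]) auto
  next
    case (Cons c cs)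
    then obtain Ds h where Dh: "distinct Ds" "set Ds \<subseteq> cls // DL" "\<forall>D\<in>set Ds. h D \<in> Sp V (blk G V) D"
      "lsum V (map f cs) = lsum V (map h Ds)" by auto
    let ?D0 = "DL `` {c}"
    have cK: "c \<in> cls" using Cons.prems by auto
    have D0: "?D0 \<in> cls // DL" using cK by (simp add: quotientI)
    have "(c, c) \<in> DL" using equiv_DL cK unfolding equiv_def refl_on_def by blast
    then have cD0: "c \<in> ?D0" by simp
    have fc: "f c \<in> Sp V (blk G V) ?D0" using Cons.prems cD0 DK[OF D0] by (intro S_single) auto
    have fcC: "f c \<in> C" using fc SC[OF D0] by blast
    have hC: "\<forall>D\<in>set Ds. h D \<in> C" using Dh SC by blast
    show ?case
    proof (cases "?D0 \<in> set Ds")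
      case True
      let ?h = "h(?D0 := f c \<oplus> h ?D0)"
      have "lsum V (map f (c # cs)) = f c \<oplus> lsum V (map h Ds)" using Dh by simp
      also have "\<dots> = lsum V (map ?h Ds)" using True Dh hC fcC by (intro ins) auto
      finally have 1: "lsum V (map f (c # cs)) = lsum V (map ?h Ds)" .
      have "\<forall>D\<in>set Ds. ?h D \<in> Sp V (blk G V) D" using Dh True fc DK[OF D0] by (auto intro: S_add)
      then show ?thesis using 1 Dh by blast
    next
      case False
      let ?h = "h(?D0 := f c)"
      have m: "map ?h Ds = map h Ds" using False by (rule map_fun_upd)
      have "lsum V (map ?h (?D0 # Ds)) = f c \<oplus> lsum V (map h Ds)" unfolding list.map lsum.simps m by simp
      then have 1: "lsum V (map f (c # cs)) = lsum V (map ?h (?D0 # Ds))" using Dh by simp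
      have "\<forall>D\<in>set (?D0 # Ds). ?h D \<in> Sp V (blk G V) D" using Dh fc by auto
      moreover have "distinct (?D0 # Ds)" "set (?D0 # Ds) \<subseteq> cls // DL" using False Dh D0 by auto
      ultimately show ?thesis using 1 by blast
    qed
  qed
  have uq: "\<forall>D\<in>set Ds. h D = z"
    if Ds: "distinct Ds" "set Ds \<subseteq> cls // DL" "\<forall>D\<in>set Ds. h D \<in> Sp V (blk G V) D" "lsum V (map h Ds) = z"
    for Ds h
  proof -
    have "\<forall>D\<in>set Ds. \<exists>p. distinct (fst p) \<and> set (fst p) \<subseteq> D \<and> (\<forall>i\<in>set (fst p). snd p i \<in> blk G V i)
            \<and> h D = lsum V (map (snd p) (fst p))"
      using Ds(3) unfolding Sp_def by fastforce
    then obtain pp where pp: "\<forall>D\<in>set Ds. distinct (fst (pp D)) \<and> set (fst (pp D)) \<subseteq> D \<and>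
       (\<forall>i\<in>set (fst (pp D)). snd (pp D) i \<in> blk G V i) \<and> h D = lsum V (map (snd (pp D)) (fst (pp D)))"
      by metis
    define L where "L = concat (map (\<lambda>D. fst (pp D)) Ds)"
    define F where "F = (\<lambda>i. snd (pp (DL `` {i})) i)"
    have disj: "\<forall>D\<in>set Ds. \<forall>D'\<in>set Ds. D \<noteq> D' \<longrightarrow> D \<inter> D' = {}"
      using Ds(2) quot_disj[OF _ _ equiv_DL] by blast
    have dL: "distinct L" unfolding L_def using Ds(1) pp disj by (intro distinct_concat_disj) auto
    have Fe: "F i = snd (pp D) i" if "D \<in> set Ds" "i \<in> set (fst (pp D))" for D i
    proof -
      have "DL `` {i} = D" using class_of[OF _ equiv_DL, of D i] that Ds(2) pp by blast
      then show ?thesis unfolding F_def by simp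
    qed
    have LK: "set L \<subseteq> cls" unfolding L_def using pp Ds(2) DK by fastforce
    have FB: "\<forall>i\<in>set L. F i \<in> blk G V i" unfolding L_def using pp Fe by fastforce
    have FC: "\<forall>i\<in>set L. F i \<in> C" using FB LK Fin by blast
    have hD: "lsum V (map F (fst (pp D))) = h D" if hDs: "D \<in> set Ds" for D
    proof -
      have mF: "map F (fst (pp D)) = map (snd (pp D)) (fst (pp D))" using Fe[OF hDs] by (intro map_cong) auto
      have "h D = lsum V (map (snd (pp D)) (fst (pp D)))" using pp hDs by blast
      then show ?thesis unfolding mF by (rule sym)
    qed
    have "lsum V (map F L) = lsum V (map (lsum V) (map (\<lambda>D. map F (fst (pp D))) Ds))"
      unfolding L_def map_concat using FC unfolding L_def by (subst lsum_concat) (auto simp: comp_def)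
    also have "map (lsum V) (map (\<lambda>D. map F (fst (pp D))) Ds) = map h Ds"
      unfolding map_map comp_def using hD by (intro map_cong) auto
    finally have "lsum V (map F L) = z" using Ds(4) by simp
    moreover have dsu: "\<forall>is f. distinct is \<and> set is \<subseteq> cls \<and> (\<forall>i\<in>set is. f i \<in> blk G V i)
                \<and> lsum V (map f is) = z \<longrightarrow> (\<forall>i\<in>set is. f i = z)" using ds unfolding is_direct_sum_def by blast
    ultimately have Fz: "\<forall>i\<in>set L. F i = z" using dL LK FB spec[OF spec[OF dsu, of L], of F] by blast
    show ?thesis
    proof
      fix D assume D: "D \<in> set Ds"
      have "\<forall>i\<in>set (fst (pp D)). F i = z" using Fz D unfolding L_def by auto
      then show "h D = z" using hD[OF D] lsum_zeros by auto
    qed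
  qed
  show ?thesis unfolding is_direct_sum_def
  proof (intro conjI ballI allI impI)
    fix D assume "D \<in> cls // DL" then show "Sp V (blk G V) D \<subseteq> C" using SC by blast
  next
    fix v assume "v \<in> C"
    then obtain cs f where "distinct cs" "set cs \<subseteq> cls" "\<forall>c\<in>set cs. f c \<in> blk G V c" "v = lsum V (map f cs)"
      using ds unfolding is_direct_sum_def by blast
    then show "\<exists>is f. distinct is \<and> set is \<subseteq> cls // DL \<and> (\<forall>i\<in>set is. f i \<in> Sp V (blk G V) i) \<and> v = lsum V (map f is)"
    proof -
      assume a: "distinct cs" "set cs \<subseteq> cls" "\<forall>c\<in>set cs. f c \<in> blk G V c" "v = lsum V (map f cs)"
      obtain Ds h where "distinct Ds" "set Ds \<subseteq> cls // DL" "\<forall>D\<in>set Ds. h D \<in> Sp V (blk G V) D"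
        "lsum V (map f cs) = lsum V (map h Ds)" using ex[OF a(1-3)] by blast
      then show ?thesis using a(4) by blast
    qed
  next
    fix "is" f i assume "distinct is \<and> set is \<subseteq> cls // DL \<and> (\<forall>i\<in>set is. f i \<in> Sp V (blk G V) i) \<and> lsum V (map f is) = z"
      "i \<in> set is"
    then show "f i = z" using uq by blast
  qed
qed

end



lemma hom_zero:
  assumes V: "is_amod V" and W: "is_amod W" and f: "amod_hom V W f"
  shows "f (mzero V) = mzero W"
proof -
  interpret v: amodl V by (rule amodl.intro[OF V])
  interpret w: amodl W by (rule amodl.intro[OF W])
  have "f (madd V (mzero V) (mzero V)) = madd W (f (mzero V)) (f (mzero V))"
    using f v.zero_in unfolding amod_hom_def by blast
  then have "madd W (f (mzero V)) (f (mzero V)) = f (mzero V)" by simp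
  moreover have "f (mzero V) \<in> mcarrier W" using f unfolding amod_hom_def by simp
  ultimately show ?thesis using w.cancel by blast
qed

lemma hom_lsum:
  assumes V: "is_amod V" and W: "is_amod W" and f: "amod_hom V W f"
  shows "set xs \<subseteq> mcarrier V \<Longrightarrow> f (lsum V xs) = lsum W (map f xs)"
proof (induction xs)
  case Nil then show ?case using hom_zero[OF V W f] by simp
next
  case (Cons x xs)
  interpret v: amodl V by (rule amodl.intro[OF V])
  have "lsum V xs \<in> mcarrier V" using Cons.prems by simp
  then show ?case using Cons f unfolding amod_hom_def by simp
qed

context setting begin

lemma hom_part:
  assumes D: "D \<in> cls // DL" and D': "D' \<in> cls // DL" and ne: "D \<noteq> D'"
    and V: "HC_D smult G R D V" and W: "HC_D smult G R D' W" and f: "amod_hom V W f"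
    and v: "v \<in> mcarrier V"
  shows "f v = mzero W"
proof -
  have Va: "is_amod V" and Vds: "is_direct_sum V cls (blk G V)" and VS: "Supp smult G R V \<subseteq> D"
    using V unfolding HC_D_def HC_def is_block_module_def by auto
  have Wa: "is_amod W" and WS: "Supp smult G R W \<subseteq> D'"
    using W unfolding HC_D_def HC_def is_block_module_def by auto
  interpret v: dsl V cls "blk G V" using blk_dsl[OF Va G Kid] .
  interpret w: dsl W cls "blk G W" using blk_dsl[OF Wa G Kid] .
  have disj: "D \<inter> D' = {}" using quot_disj[OF D D' equiv_DL ne] .
  obtain cs g where csg: "distinct cs" "set cs \<subseteq> cls" "\<forall>c\<in>set cs. g c \<in> blk G V c" "v = lsum V (map g cs)"
    using Vds v unfolding is_direct_sum_def by blast
  have gC: "\<forall>c\<in>set cs. g c \<in> mcarrier V" using csg v.Fin by blast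
  have sgC: "set (map g cs) \<subseteq> mcarrier V" using gC by auto
  have "f v = lsum W (map f (map g cs))" using csg(4) hom_lsum[OF Va Wa f sgC] by simp
  moreover have "\<forall>c\<in>set cs. f (g c) = mzero W"
  proof
    fix c assume c: "c \<in> set cs"
    have cK: "c \<in> cls" using c csg by blast
    show "f (g c) = mzero W"
    proof (cases "blk G V c = {mzero V}")
      case True
      then show ?thesis using csg c hom_zero[OF Va Wa f] by auto
    next
      case False
      then have "c \<in> D" using VS cK unfolding Supp_def by blast
      then have "c \<notin> Supp smult G R W" using WS disj by blast
      then have bW: "blk G W c = {mzero W}" using cK unfolding Supp_def by blast
      obtain I where I: "I \<in> Wset G c" "\<forall>x\<in>I. mact V x (g c) = mzero V" "g c \<in> mcarrier V"
        using csg c unfolding blk_def by blast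
      have "\<forall>x\<in>I. mact W x (f (g c)) = mzero W"
        using I f hom_zero[OF Va Wa f] unfolding amod_hom_def by metis
      moreover have "f (g c) \<in> mcarrier W" using I f unfolding amod_hom_def by blast
      ultimately have "f (g c) \<in> blk G W c" using I unfolding blk_def by blast
      then show ?thesis using bW by blast
    qed
  qed
  ultimately show ?thesis by (simp add: w.lsum_zeros)
qed

lemma supp_ne:
  assumes S: "simple_amod V" and ds: "is_direct_sum V cls (blk G V)"
  shows "Supp smult G R V \<noteq> {}"
proof -
  have Va: "is_amod V" using S unfolding simple_amod_def by blast
  interpret dsl V cls "blk G V" using blk_dsl[OF Va G Kid] .
  obtain v where v: "v \<in> C" "v \<noteq> z" using S zero_in unfolding simple_amod_def by blast
  obtain cs g where csg: "distinct cs" "set cs \<subseteq> cls" "\<forall>c\<in>set cs. g c \<in> blk G V c" "v = lsum V (map g cs)"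
    using ds v unfolding is_direct_sum_def by blast
  have "\<exists>c\<in>set cs. g c \<noteq> z"
  proof (rule ccontr)
    assume "\<not> ?thesis"
    then have "v = z" using csg(4) lsum_zeros by auto
    then show False using v by blast
  qed
  then obtain c where "c \<in> set cs" "g c \<noteq> z" by blast
  then show ?thesis using csg unfolding Supp_def by blast
qed

lemma simple_part:
  assumes S: "simple_amod V" and ds: "is_direct_sum V cls (blk G V)"
    and B: "B \<in> Supp smult G R V" and C': "C' \<in> Supp smult G R V"
  shows "(B, C') \<in> PB"
proof -
  have Va: "is_amod V" using S unfolding simple_amod_def by blast
  interpret dsl V cls "blk G V" using blk_dsl[OF Va G Kid] .
  let ?T = "{C. (B, C) \<in> PB}"
  have TK: "?T \<subseteq> cls" using PB_sub by blast
  have BK: "B \<in> cls" and CK: "C' \<in> cls" using B C' unfolding Supp_def by auto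
  have "z \<in> blk G V B" using F0 BK by simp
  then obtain v where v: "v \<in> blk G V B" "v \<noteq> z" using B unfolding Supp_def by blast
  obtain I where I: "I \<in> Wset G B" "\<forall>x\<in>I. x \<cdot> v = z" "v \<in> C" using v unfolding blk_def by blast
  have allT: "a \<cdot> v \<in> Sp V (blk G V) ?T" for a using lemmaB[OF sub eqv hcb Va ds BK I(1) I(3) I(2)] .
  let ?U = "range (\<lambda>a. a \<cdot> v)"
  have vC: "v \<in> C" using I by blast
  have UC: "?U \<subseteq> C" using vC by auto
  have "submod ?U V" unfolding submod_def is_amod_def
  proof (simp only: restr_sel, intro conjI ballI allI)
    show "?U \<subseteq> C" by (rule UC)
    show "z \<in> ?U" using vC by (metis act_zero_l rangeI)
  next
    fix x y assume "x \<in> ?U" "y \<in> ?U" then show "x \<oplus> y \<in> ?U" using vC by (auto simp: act_add[symmetric])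
  next
    fix u x y assume "u \<in> ?U" "x \<in> ?U" "y \<in> ?U" then show "u \<oplus> x \<oplus> y = u \<oplus> (x \<oplus> y)" using UC assoc by blast
  next
    fix x y assume "x \<in> ?U" "y \<in> ?U" then show "x \<oplus> y = y \<oplus> x" using UC comm by blast
  next
    fix x assume "x \<in> ?U" then show "z \<oplus> x = x" using UC by auto
  next
    fix x assume "x \<in> ?U"
    then obtain a where a: "x = a \<cdot> v" by blast
    have "a \<cdot> v \<oplus> (- a) \<cdot> v = z" using vC by (simp add: act_add[symmetric])
    then show "\<exists>w\<in>?U. x \<oplus> w = z" using a by blast
  next
    fix b x assume "x \<in> ?U" then show "b \<cdot> x \<in> ?U" using vC by (auto simp: act_mult[symmetric])
  next
    fix a b x assume "x \<in> ?U" then show "(a + b) \<cdot> x = a \<cdot> x \<oplus> b \<cdot> x" using UC act_add by blast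
  next
    fix a x y assume "x \<in> ?U" "y \<in> ?U" then show "a \<cdot> (x \<oplus> y) = a \<cdot> x \<oplus> a \<cdot> y" using UC act_dist by blast
  next
    fix a b x assume "x \<in> ?U" then show "(a * b) \<cdot> x = a \<cdot> b \<cdot> x" using UC act_mult by blast
  next
    fix x assume "x \<in> ?U" then show "1 \<cdot> x = x" using UC by auto
  qed
  then have "?U = {z} \<or> ?U = C" using S unfolding simple_amod_def by blast
  moreover have "v \<in> ?U" using vC by (metis act_one rangeI)
  ultimately have UeqC: "?U = C" using v by blast
  have "z \<in> blk G V C'" using F0 CK by simp
  then obtain u where u: "u \<in> blk G V C'" "u \<noteq> z" using C' unfolding Supp_def by blast
  have "u \<in> C" using u unfolding blk_def by blast
  then obtain a where "u = a \<cdot> v" using UeqC by blast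
  then have uT: "u \<in> Sp V (blk G V) ?T" using allT by simp
  show ?thesis
  proof (rule ccontr)
    assume "(B, C') \<notin> PB"
    then have "u = z" using S_unique[OF ds TK CK _ u(1) uT] by blast
    then show False using u by blast
  qed
qed

end



theorem mainTheorem1:
  fixes smult :: "'k::field \<Rightarrow> 'a::{ring,monoid_mult} \<Rightarrow> 'a"
    and G :: "'a set"
    and R :: "('a set \<times> 'a set) set"
  assumes "is_kalgebra smult"
    and "is_subalgebra smult G"
    and "equiv (cfs smult G) R"
    and "HC_block_subalgebra smult G R"
  shows
    "(\<forall>V :: ('a, 'v) amod. HC smult G R V \<longrightarrow>
        (\<exists>VD. (\<forall>D \<in> classes smult G R // Delta smult G R.
                  submod (VD D) V \<and> HC_D smult G R D (V\<lparr>mcarrier := VD D\<rparr>))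
              \<and> is_direct_sum V (classes smult G R // Delta smult G R) VD))
     \<and> (\<forall>D \<in> classes smult G R // Delta smult G R. \<forall>D' \<in> classes smult G R // Delta smult G R.
          D \<noteq> D' \<longrightarrow>
          (\<forall>(V :: ('a, 'v) amod) (W :: ('a, 'w) amod) f.
              HC_D smult G R D V \<and> HC_D smult G R D' W \<and> amod_hom V W f
              \<longrightarrow> (\<forall>v \<in> mcarrier V. f v = mzero W)))
     \<and> (\<forall>V :: ('a, 'u) amod.
          (simple_amod V \<and> HC smult G R V) \<longleftrightarrow>
          (\<exists>D \<in> classes smult G R // Nabla smult G R. simple_amod V \<and> HC_D smult G R D V))
     \<and> (\<forall>D \<in> classes smult G R // Nabla smult G R. \<forall>D' \<in> classes smult G R // Nabla smult G R.
          D \<noteq> D' \<longrightarrow>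
          (\<forall>V :: ('a, 'u) amod. \<not> (simple_amod V \<and> HC_D smult G R D V \<and> HC_D smult G R D' V)))"
proof -
  interpret setting smult G R using assms(2-4) by (rule setting.intro)
  have p1: "\<exists>VD. (\<forall>D \<in> cls // DL. submod (VD D) V \<and> HC_D smult G R D (V\<lparr>mcarrier := VD D\<rparr>))
              \<and> is_direct_sum V (cls // DL) VD" if "HC smult G R V" for V :: "('a, 'v) amod"
  proof -
    have Va: "is_amod V" and ds: "is_direct_sum V cls (blk G V)"
      using that unfolding HC_def is_block_module_def by auto
    show ?thesis using VD_submod[OF Va ds] VD_HC[OF Va ds] VD_ds[OF Va ds] by blast
  qed
  have p2: "\<forall>v \<in> mcarrier V. f v = mzero W"
    if "D \<in> cls // DL" "D' \<in> cls // DL" "D \<noteq> D'"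
       "HC_D smult G R D V \<and> HC_D smult G R D' W \<and> amod_hom V W f"
    for D D' and V :: "('a, 'v) amod" and W :: "('a, 'w) amod" and f
    using that(4) by (intro ballI hom_part[OF that(1-3)]) auto
  have p3: "\<exists>D \<in> cls // NB. simple_amod V \<and> HC_D smult G R D V"
    if h: "simple_amod V" "HC smult G R V" for V :: "('a, 'u) amod"
  proof -
    have ds: "is_direct_sum V cls (blk G V)" using h unfolding HC_def is_block_module_def by auto
    obtain B where B: "B \<in> Supp smult G R V" using supp_ne[OF h(1) ds] by blast
    have BK: "B \<in> cls" using B unfolding Supp_def by blast
    have "Supp smult G R V \<subseteq> NB `` {B}"
    proof
      fix C' assume C': "C' \<in> Supp smult G R V"
      have "(B, C') \<in> P" "(C', B) \<in> P" using simple_part[OF h(1) ds B C'] simple_part[OF h(1) ds C' B] PB_P by auto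
      then show "C' \<in> NB `` {B}" unfolding Nabla_def by auto
    qed
    moreover have "NB `` {B} \<in> cls // NB" using BK by (simp add: quotientI)
    ultimately show ?thesis using h unfolding HC_D_def by blast
  qed
  have p4: "\<not> (simple_amod V \<and> HC_D smult G R D V \<and> HC_D smult G R D' V)"
    if "D \<in> cls // NB" "D' \<in> cls // NB" "D \<noteq> D'" for D D' and V :: "('a, 'u) amod"
  proof
    assume h: "simple_amod V \<and> HC_D smult G R D V \<and> HC_D smult G R D' V"
    have ds: "is_direct_sum V cls (blk G V)" using h unfolding HC_D_def HC_def is_block_module_def by auto
    have "Supp smult G R V \<subseteq> D \<inter> D'" using h unfolding HC_D_def by auto
    then have "Supp smult G R V = {}" using quot_disj[OF that(1,2) equiv_NB that(3)] by blast
    then show False using supp_ne ds h by blast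
  qed
  show ?thesis
  proof (intro conjI)
    show "\<forall>V :: ('a, 'v) amod. HC smult G R V \<longrightarrow>
        (\<exists>VD. (\<forall>D \<in> cls // DL. submod (VD D) V \<and> HC_D smult G R D (V\<lparr>mcarrier := VD D\<rparr>))
              \<and> is_direct_sum V (cls // DL) VD)"
      using p1 by blast
  next
    show "\<forall>D \<in> cls // DL. \<forall>D' \<in> cls // DL. D \<noteq> D' \<longrightarrow>
          (\<forall>(V :: ('a, 'v) amod) (W :: ('a, 'w) amod) f.
              HC_D smult G R D V \<and> HC_D smult G R D' W \<and> amod_hom V W f
              \<longrightarrow> (\<forall>v \<in> mcarrier V. f v = mzero W))"
    proof (intro ballI impI allI)
      fix D D' and V :: "('a, 'v) amod" and W :: "('a, 'w) amod" and f v
      assume h: "D \<in> cls // DL" "D' \<in> cls // DL" "D \<noteq> D'"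
        "HC_D smult G R D V \<and> HC_D smult G R D' W \<and> amod_hom V W f" "v \<in> mcarrier V"
      have "\<forall>v \<in> mcarrier V. f v = mzero W" using h(1-4) by (rule p2)
      then show "f v = mzero W" using h(5) by blast
    qed
  next
    show "\<forall>V :: ('a, 'u) amod. (simple_amod V \<and> HC smult G R V) \<longleftrightarrow>
          (\<exists>D \<in> cls // NB. simple_amod V \<and> HC_D smult G R D V)"
    proof (intro allI iffI)
      fix V :: "('a, 'u) amod"
      assume "simple_amod V \<and> HC smult G R V"
      then show "\<exists>D \<in> cls // NB. simple_amod V \<and> HC_D smult G R D V" using p3 by blast
    next
      fix V :: "('a, 'u) amod"
      assume "\<exists>D \<in> cls // NB. simple_amod V \<and> HC_D smult G R D V"
      then show "simple_amod V \<and> HC smult G R V" unfolding HC_D_def by blast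
    qed
  next
    show "\<forall>D \<in> cls // NB. \<forall>D' \<in> cls // NB. D \<noteq> D' \<longrightarrow>
          (\<forall>V :: ('a, 'u) amod. \<not> (simple_amod V \<and> HC_D smult G R D V \<and> HC_D smult G R D' V))"
      using p4 by blast
  qed
qed



end
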